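(* Let $\phi(a)=(1-a)^2$ and assume $\Omega$ is differentiable, so that $R_\phi$ and each $R^{\mathrm{semi}}_\phi(\cdot,\mathbf{q})$ are convex and differentiable; let $\mathbf{w}_{\mathrm{sup}}$ be a minimizer of $R_\phi$. Then: (a) For $\mathbf{q}\in[0,1]^U$, $\mathbf{w}_{\mathrm{sup}}$ minimizes $R^{\mathrm{semi}}_\phi(\cdot,\mathbf{q})$ if and only if $\mathbf{X}_{\mathrm{u}}^\top\mathbf{q}=\tfrac12\big(\mathbf{X}_{\mathrm{u}}^\top\mathbf{1}+\mathbf{X}_{\mathrm{u}}^\top\mathbf{X}_{\mathrm{u}}\mathbf{w}_{\mathrm{sup}}\big)$, where $\mathbf{1}\in\mathbb{R}^U$ is the all-ones vector. (b) If $\mathbf{X}_{\mathrm{u}}$ has rank $U$ (so $d\ge U$) and $\mathbf{X}_{\mathrm{u}}\mathbf{w}_{\mathrm{sup}}\notin[-1,1]^U$, then no $\mathbf{q}\in[0,1]^U$ makes $\mathbf{w}_{\mathrm{sup}}$ a minimizer of $R^{\mathrm{semi}}_\phi(\cdot,\mathbf{q})$, i.e. $\mathbf{w}_{\mathrm{sup}}\notin\mathcal{C}_\phi$. (c) If $\|\mathbf{X}_{\mathrm{u}}\mathbf{w}_{\mathrm{sup}}\|_2>\sqrt{U}$, then no $\mathbf{q}\in[0,1]^U$ makes $\mathbf{w}_{\mathrm{sup}}$ a minimizer of $R^{\mathrm{semi}}_\phi(\cdot,\mathbf{q})$, i.e. $\mathbf{w}_{\mathrm{sup}}\notin\mathc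al{C}_\phi$.
   Context: Fix integers $L,U,d\ge 1$. Let $\mathbf{X}\in\mathbb{R}^{L\times d}$ be a matrix whose rows $\mathbf{x}_1^\top,\dots,\mathbf{x}_L^\top$ are the labeled objects, with labels $\mathbf{y}\in\{-1,+1\}^L$. Let $\mathbf{X}_{\mathrm{u}}\in\mathbb{R}^{U\times d}$ be a matrix whose rows $\mathbf{x}_{\mathrm{u},1}^\top,\dots,\mathbf{x}_{\mathrm{u},U}^\top$ are the unlabeled objects. Let $\phi:\mathbb{R}\to\mathbb{R}$ be a loss function, $\Omega:\mathbb{R}^d\to\mathbb{R}$ a convex function and $\lambda\ge 0$. The supervised risk is $R_\phi(\mathbf{w})=\sum_{i=1}^L\phi(y_i\mathbf{x}_i^\top\mathbf{w})+\lambda\Omega(\mathbf{w})$. For responsibilities $\mathbf{q}\in[0,1]^U$ the semi-supervised risk is $R^{\mathrm{semi}}_\phi(\mathbf{w},\mathbf{q})=R_\phi(\mathbf{w})+\sum_{j=1}^U\big[q_j\phi(\mathbf{x}_{\mathrm{u},j}^\top\mathbf{w})+(1-q_j)\phi(-\mathbf{x}_{\mathrm{u},j}^\top\mathbf{w})\big]$. The constraint set is $\mathcal{C}_\phi=\{\mathbf{w}\in\mathbb{R}^d:\ \exists\,\mathbf{q}\in[0,1]^U \text{ such that } \mathbf{w} \text{ minimizes } R^{\mathrm{semi}}_\phi(\cdot,\mathbf{q})\}$. *)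

theory Defs
  imports "HOL-Analysis.Analysis"
begin

definition sq_loss :: "real \<Rightarrow> real" where
  "sq_loss a = (1 - a)^2"

definition sup_risk ::
  "(real \<Rightarrow> real) \<Rightarrow> real^'d^'l \<Rightarrow> real^'l \<Rightarrow> real \<Rightarrow> (real^'d \<Rightarrow> real) \<Rightarrow> real^'d \<Rightarrow> real" where
  "sup_risk \<phi> X y lam \<Omega> w = (\<Sum>i\<in>UNIV. \<phi> (y $ i * ((X $ i) \<bullet> w))) + lam * \<Omega> w"

definition semi_risk ::
  "(real \<Rightarrow> real) \<Rightarrow> real^'d^'l \<Rightarrow> real^'l \<Rightarrow> real \<Rightarrow> (real^'d \<Rightarrow> real) \<Rightarrow> real^'d^'u
    \<Rightarrow> real^'d \<Rightarrow> real^'u \<Rightarrow> real" where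
  "semi_risk \<phi> X y lam \<Omega> Xu w q = sup_risk \<phi> X y lam \<Omega> w
     + (\<Sum>j\<in>UNIV. q $ j * \<phi> ((Xu $ j) \<bullet> w) + (1 - q $ j) * \<phi> (- ((Xu $ j) \<bullet> w)))"

definition is_minimizer :: "('a \<Rightarrow> real) \<Rightarrow> 'a \<Rightarrow> bool" where
  "is_minimizer f w \<longleftrightarrow> (\<forall>v. f w \<le> f v)"

definition unit_box :: "(real^'u) set" where
  "unit_box = {q. \<forall>j. 0 \<le> q $ j \<and> q $ j \<le> 1}"

definition constraint_set ::
  "(real \<Rightarrow> real) \<Rightarrow> real^'d^'l \<Rightarrow> real^'l \<Rightarrow> real \<Rightarrow> (real^'d \<Rightarrow> real) \<Rightarrow> real^'d^'u
    \<Rightarrow> (real^'d) set" where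
  "constraint_set \<phi> X y lam \<Omega> Xu =
     {w. \<exists>q\<in>(unit_box :: (real^'u) set). is_minimizer (\<lambda>v. semi_risk \<phi> X y lam \<Omega> Xu v q) w}"

end

theory Submission imports Defs begin

definition Gq :: "real^'d^'u \<Rightarrow> real^'u \<Rightarrow> real^'d \<Rightarrow> real" where
  "Gq Xu q w = (\<Sum>j\<in>UNIV. 1 + ((Xu$j) \<bullet> w)^2 + 2 * ((Xu$j) \<bullet> w) * (1 - 2 * q$j))"

lemma semi_decomp:
  "semi_risk sq_loss X y lam \<Omega> Xu w q = sup_risk sq_loss X y lam \<Omega> w + Gq Xu q w"
  unfolding semi_risk_def Gq_def
  by (auto intro!: sum.cong simp: sq_loss_def power2_eq_square algebra_simps)

lemma sup_diff:
  assumes "\<Omega> differentiable at w0"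
  shows "\<exists>D. (sup_risk sq_loss X y lam \<Omega> has_derivative D) (at w0)"
proof -
  obtain D where D: "(\<Omega> has_derivative D) (at w0)" using assms differentiable_def by blast
  show ?thesis unfolding sup_risk_def sq_loss_def
    apply (rule exI)
    apply (rule has_derivative_add)
     apply (rule has_derivative_sum)
     apply (rule has_derivative_power)
     apply (auto intro!: derivative_eq_intros)[1]
    apply (rule has_derivative_mult_right[OF D])
    done
qed

definition bvec :: "real^'d^'u \<Rightarrow> real^'u \<Rightarrow> real^'d \<Rightarrow> real^'u" where
  "bvec Xu q w = (\<chi> j. (Xu$j) \<bullet> w + 1 - 2 * q$j)"

lemma inner_sum_rows: "(\<Sum>j\<in>UNIV. (b::real^'u)$j * ((Xu::real^'d^'u)$j \<bullet> h)) = (transpose Xu *v b) \<bullet> h"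
  by (simp only: transpose_matrix_vector dot_lmul_matrix) (simp add: inner_vec_def matrix_vector_mul_component)

lemma Gq_deriv: "(Gq Xu q has_derivative (\<lambda>h. 2 * ((transpose Xu *v bvec Xu q w) \<bullet> h))) (at w)"
proof -
  have "(Gq Xu q has_derivative (\<lambda>h. \<Sum>j\<in>UNIV. 2 * ((Xu$j) \<bullet> w) * ((Xu$j) \<bullet> h) + 2 * ((Xu$j) \<bullet> h) * (1 - 2 * q$j))) (at w)"
    unfolding Gq_def
    by (auto intro!: derivative_eq_intros sum.cong)
  moreover have "(\<lambda>h. \<Sum>j\<in>UNIV. 2 * ((Xu$j) \<bullet> w) * ((Xu$j) \<bullet> h) + 2 * ((Xu$j) \<bullet> h) * (1 - 2 * q$j))
     = (\<lambda>h. 2 * ((transpose Xu *v bvec Xu q w) \<bullet> h))"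
  proof
    fix h
    have "(\<Sum>j\<in>UNIV. 2 * ((Xu$j) \<bullet> w) * ((Xu$j) \<bullet> h) + 2 * ((Xu$j) \<bullet> h) * (1 - 2 * q$j))
       = 2 * (\<Sum>j\<in>UNIV. (bvec Xu q w)$j * ((Xu$j) \<bullet> h))"
      by (simp add: sum_distrib_left bvec_def algebra_simps sum.distrib)
    then show "(\<Sum>j\<in>UNIV. 2 * ((Xu$j) \<bullet> w) * ((Xu$j) \<bullet> h) + 2 * ((Xu$j) \<bullet> h) * (1 - 2 * q$j))
       = 2 * ((transpose Xu *v bvec Xu q w) \<bullet> h)" by (simp only: inner_sum_rows)
  qed
  ultimately show ?thesis by simp
qed

lemma Gq_diff: "Gq Xu q v - Gq Xu q w = (norm (Xu *v (v - w)))^2 + 2 * ((transpose Xu *v bvec Xu q w) \<bullet> (v - w))"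
proof -
  have "Gq Xu q v - Gq Xu q w = (\<Sum>j\<in>UNIV. ((Xu$j) \<bullet> (v-w))^2 + 2 * ((bvec Xu q w)$j * ((Xu$j) \<bullet> (v-w))))"
    unfolding Gq_def bvec_def sum_subtractf[symmetric]
    by (intro sum.cong refl) (simp add: inner_diff_right power2_eq_square algebra_simps)
  also have "\<dots> = (\<Sum>j\<in>UNIV. ((Xu$j) \<bullet> (v-w))^2) + 2 * (\<Sum>j\<in>UNIV. (bvec Xu q w)$j * ((Xu$j) \<bullet> (v-w)))"
    by (simp add: sum.distrib sum_distrib_left)
  also have "(\<Sum>j\<in>UNIV. ((Xu$j) \<bullet> (v-w))^2) = (Xu *v (v - w)) \<bullet> (Xu *v (v - w))"
    by (simp only: inner_vec_def[of "Xu *v (v - w)"] matrix_vector_mul_component power2_eq_square) simp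
  also have "\<dots> = (norm (Xu *v (v - w)))^2" by (simp add: power2_norm_eq_inner)
  finally show ?thesis by (simp only: inner_sum_rows)
qed

lemma key:
  assumes Omega_diff: "\<forall>w. \<Omega> differentiable (at w)"
    and wsup_min: "is_minimizer (sup_risk sq_loss X y lam \<Omega>) wsup"
  shows "is_minimizer (\<lambda>w. semi_risk sq_loss X y lam \<Omega> Xu w q) wsup \<longleftrightarrow>
         transpose Xu *v bvec Xu q wsup = 0"
proof
  let ?c = "transpose Xu *v bvec Xu q wsup"
  assume m: "is_minimizer (\<lambda>w. semi_risk sq_loss X y lam \<Omega> Xu w q) wsup"
  obtain D where D: "(sup_risk sq_loss X y lam \<Omega> has_derivative D) (at wsup)"
    using sup_diff Omega_diff by blast
  have D0: "D = (\<lambda>h. 0)"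
    by (rule has_derivative_local_min[OF D]) (use wsup_min in \<open>auto simp: is_minimizer_def\<close>)
  have DS: "((\<lambda>w. semi_risk sq_loss X y lam \<Omega> Xu w q) has_derivative (\<lambda>h. D h + 2 * (?c \<bullet> h))) (at wsup)"
    unfolding semi_decomp by (intro has_derivative_add D Gq_deriv)
  have "(\<lambda>h. D h + 2 * (?c \<bullet> h)) = (\<lambda>h. 0)"
    by (rule has_derivative_local_min[OF DS]) (use m in \<open>auto simp: is_minimizer_def\<close>)
  then have "D ?c + 2 * (?c \<bullet> ?c) = 0" by metis
  then show "?c = 0" using D0 by simp
next
  assume c: "transpose Xu *v bvec Xu q wsup = 0"
  show "is_minimizer (\<lambda>w. semi_risk sq_loss X y lam \<Omega> Xu w q) wsup"
    unfolding is_minimizer_def semi_decomp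
  proof
    fix v
    have "Gq Xu q v - Gq Xu q wsup \<ge> 0" using Gq_diff[of Xu q v wsup] c by simp
    moreover have "sup_risk sq_loss X y lam \<Omega> wsup \<le> sup_risk sq_loss X y lam \<Omega> v"
      using wsup_min by (simp add: is_minimizer_def)
    ultimately show "sup_risk sq_loss X y lam \<Omega> wsup + Gq Xu q wsup \<le> sup_risk sq_loss X y lam \<Omega> v + Gq Xu q v"
      by simp
  qed
qed

lemma bvec_eq: "bvec Xu q w = Xu *v w + (\<chi> j. 1) - 2 *\<^sub>R q"
  by (simp add: bvec_def vec_eq_iff matrix_vector_mul_component)

lemma eq_conv: "(transpose Xu *v bvec Xu q w = 0) \<longleftrightarrow>
   transpose Xu *v q = (1/2) *\<^sub>R (transpose Xu *v (\<chi> j. 1) + transpose Xu *v (Xu *v w))"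
  unfolding bvec_eq
  by (simp add: matrix_vector_right_distrib matrix_vector_mult_diff_distrib vec_eq_iff algebra_simps) (auto simp: field_simps)

theorem mainTheorem8:
  fixes X :: "real^'d^'l" and y :: "real^'l" and Xu :: "real^'d^'u"
    and \<Omega> :: "real^'d \<Rightarrow> real" and lam :: real and wsup :: "real^'d"
  assumes labels: "\<forall>i. y $ i \<in> {-1, 1}"
    and lam_nonneg: "lam \<ge> 0"
    and Omega_convex: "convex_on UNIV \<Omega>"
    and Omega_diff: "\<forall>w. \<Omega> differentiable (at w)"
    and wsup_min: "is_minimizer (sup_risk sq_loss X y lam \<Omega>) wsup"
  shows
    "(\<forall>q\<in>(unit_box :: (real^'u) set).
        is_minimizer (\<lambda>w. semi_risk sq_loss X y lam \<Omega> Xu w q) wsup \<longleftrightarrow>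
        transpose Xu *v q
          = (1/2) *\<^sub>R (transpose Xu *v (\<chi> j. 1) + transpose Xu *v (Xu *v wsup)))
   \<and> ((rank Xu = CARD('u) \<and> Xu *v wsup \<notin> {v. \<forall>j. -1 \<le> v $ j \<and> v $ j \<le> 1})
        \<longrightarrow> wsup \<notin> constraint_set sq_loss X y lam \<Omega> Xu)
   \<and> (norm (Xu *v wsup) > sqrt (real CARD('u))
        \<longrightarrow> wsup \<notin> constraint_set sq_loss X y lam \<Omega> Xu)"
proof -
  have K: "is_minimizer (\<lambda>w. semi_risk sq_loss X y lam \<Omega> Xu w q) wsup \<longleftrightarrow>
         transpose Xu *v bvec Xu q wsup = 0" for q
    by (rule key[OF Omega_diff wsup_min])
  have C: "\<exists>q\<in>(unit_box :: (real^'u) set). transpose Xu *v bvec Xu q wsup = 0"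
    if "wsup \<in> constraint_set sq_loss X y lam \<Omega> Xu"
    using that K unfolding constraint_set_def by auto
  have B: "wsup \<notin> constraint_set sq_loss X y lam \<Omega> Xu"
    if r: "rank Xu = CARD('u)" and n: "Xu *v wsup \<notin> {v. \<forall>j. -1 \<le> v $ j \<and> v $ j \<le> 1}"
  proof
    assume "wsup \<in> constraint_set sq_loss X y lam \<Omega> Xu"
    then obtain q where q: "q \<in> (unit_box :: (real^'u) set)" and e: "transpose Xu *v bvec Xu q wsup = 0"
      using C by blast
    have "rank (transpose Xu) = CARD('u)" using r by (simp add: rank_transpose)
    then have "inj ((*v) (transpose Xu))" by (simp add: full_rank_injective)
    moreover have "transpose Xu *v bvec Xu q wsup = transpose Xu *v 0" using e by simp
    ultimately have "bvec Xu q wsup = 0" by (meson injD)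
    then have "\<forall>j. (Xu *v wsup) $ j = 2 * q$j - 1"
      by (auto simp: bvec_def vec_eq_iff matrix_vector_mul_component) (metis add_diff_cancel_right')
    then show False using n q by (auto simp: unit_box_def)
  qed
  have N: "wsup \<notin> constraint_set sq_loss X y lam \<Omega> Xu"
    if n: "norm (Xu *v wsup) > sqrt (real CARD('u))"
  proof
    assume "wsup \<in> constraint_set sq_loss X y lam \<Omega> Xu"
    then obtain q where q: "q \<in> (unit_box :: (real^'u) set)" and e: "transpose Xu *v bvec Xu q wsup = 0"
      using C by blast
    define a where "a = Xu *v wsup"
    define b where "b = (\<chi> j. (2 * q$j - 1 :: real))"
    have bv: "bvec Xu q wsup = a - b"
      by (simp add: a_def b_def bvec_def vec_eq_iff matrix_vector_mul_component)
    have "(a - b) \<bullet> a = 0"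
    proof -
      have "(a - b) \<bullet> a = ((a - b) v* Xu) \<bullet> wsup" by (simp add: dot_lmul_matrix a_def)
      also have "\<dots> = 0" using e bv by simp
      finally show ?thesis .
    qed
    then have aa: "a \<bullet> a = b \<bullet> a" by (simp add: inner_diff_left)
    have "b \<bullet> b \<le> real CARD('u)"
    proof -
      have "b \<bullet> b = (\<Sum>j\<in>UNIV. (2 * q$j - 1)^2)" by (simp add: inner_vec_def b_def power2_eq_square)
      also have "\<dots> \<le> (\<Sum>j\<in>(UNIV::'u set). 1)"
      proof (rule sum_mono)
        fix j :: 'u
        have "0 \<le> q$j" "q$j \<le> 1" using q by (auto simp: unit_box_def)
        then have h: "0 \<le> q$j * (1 - q$j)" by simp
        then show "(2 * q$j - 1)^2 \<le> 1" by (simp add: power2_eq_square algebra_simps)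
      qed
      finally show ?thesis by simp
    qed
    then have nb: "norm b \<le> sqrt (real CARD('u))"
      by (simp add: norm_eq_sqrt_inner)
    have "norm a ^ 2 \<le> norm b * norm a"
      using aa Cauchy_Schwarz_ineq2[of b a] by (simp add: power2_norm_eq_inner)
    then have "norm a \<le> norm b"
      by (cases "norm a = 0") (auto simp: power2_eq_square)
    then show False using n nb a_def by simp
  qed
  show ?thesis using K eq_conv B N by blast
qed

end
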